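(* Let $p,q$ be distinct atoms and $\varphi := \Box(p\land q)\to[\ddagger(p\land q)](\Box p\lor\Box q)$. Then $\varphi$ is true at every world of every model under the uniform semantics $\models_u$, but there is an $\mathsf{S5}$ model (relation an equivalence relation) and a world $w$ in it at which $\varphi$ is false under the dependent semantics $\models_d$. Consequently the logic of valid formulas under $\models_u$ differs from that under $\models_d$, and this remains so when both are restricted to the class of $\mathsf{S5}$ models.
   Context: Fix a countable non-empty set $\mathit{At}$ of atoms. Formulas are built from $\top$, atoms, $\lnot$, $\land$, $\Box$ and, for each propositional $\pi$, the operator $[\ddagger\pi]$. A model is $\mathcal{M}=\langle W,R,V\rangle$, $W\neq\varnothing$, $R\subseteq W\times W$, $V:\mathit{At}\to\mathcal{P}(W)$; both satisfaction relations $\models_u,\models_d$ interpret atoms, Booleans and $\Box$ in the standard Kripke way. A literal is an atom or its negation; a clause is a finite set $D$ of literals read as $\bigvee D$, tautological if it contains $p$ and $\lnot p$ for some $p$. For propositional $\pi$, $\mathcal{C}(\pi)$ is the set of non-tautological clauses $D$ with $\models\pi\to\bigvee D$ and no $D'\subsetneq D$ with $\models\pi\to\bigvee D'$. (E.g. $\mathcal{C}(p\land q)=\{\{p\},\{q\}\}$, $\mathcal{C}(\lnot(p\land q))=\{\{\lnot p,\lnot q\}\}$.) Uniform semantics: for non-tautological clauses $D_1,D_2$, $\mathcal{M}^{(D_1,D_2)}_u=\langle W',R',V'\rangle$ has $W'=W\times\{0,1,2\}$, $(w,i)R'(v,j)$ iff $wRv$, $(w,0)\in V'(p)$ iff $w\in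 V(p)$, and for $i\in\{1,2\}$: $(w,i)\in V'(p)$ iff $\lnot p\in D_i$, or $\{p,\lnot p\}\cap D_i=\varnothing$ and $w\in V(p)$. $\mathcal{M},w\models_u[\ddagger\pi]\psi$ iff for all $D_1\in\mathcal{C}(\pi)$, $D_2\in\mathcal{C}(\lnot\pi)$, $\mathcal{M}^{(D_1,D_2)}_u,(w,0)\models_u\psi$. Dependent semantics: for functions $f_1:W\to\mathcal{C}(\pi)$, $f_2:W\to\mathcal{C}(\lnot\pi)$, $\mathcal{M}^{(f_1,f_2)}_d=\langle W'',R'',V''\rangle$ has $W''=W\times\{0,1,2\}$, $(w,i)R''(v,j)$ iff $wRv$, $(w,0)\in V''(p)$ iff $w\in V(p)$, and for $i\in\{1,2\}$: $(w,i)\in V''(p)$ iff $\lnot p\in f_i(w)$, or $\{p,\lnot p\}\cap f_i(w)=\varnothing$ and $w\in V(p)$. $\mathcal{M},w\models_d[\ddagger\pi]\psi$ iff for all $f_1:W\to\mathcal{C}(\pi)$ and all $f_2:W\to\mathcal{C}(\lnot\pi)$, $\mathcal{M}^{(f_1,f_2)}_d,(w,0)\models_d\psi$. *)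

theory Defs
  imports Main "HOL-Library.Countable"
begin

datatype 'a pf = PTop | PAtom 'a | PNeg "'a pf" | PAnd "'a pf" "'a pf"

datatype 'a fm = Top | Atom 'a | Neg "'a fm" | And "'a fm" "'a fm" | Box "'a fm"
  | Upd "'a pf" "'a fm"

definition Or :: "'a fm \<Rightarrow> 'a fm \<Rightarrow> 'a fm" where
  "Or a b = Neg (And (Neg a) (Neg b))"

definition Imp :: "'a fm \<Rightarrow> 'a fm \<Rightarrow> 'a fm" where
  "Imp a b = Neg (And a (Neg b))"

fun peval :: "('a \<Rightarrow> bool) \<Rightarrow> 'a pf \<Rightarrow> bool" where
  "peval v PTop = True"
| "peval v (PAtom p) = v p"
| "peval v (PNeg a) = (\<not> peval v a)"
| "peval v (PAnd a b) = (peval v a \<and> peval v b)"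

text \<open>A literal is (atom, polarity): (p, True) is p, (p, False) is not p.
  A clause is a finite set of literals, read disjunctively.\<close>
type_synonym 'a clause = "('a \<times> bool) set"

definition tautological :: "'a clause \<Rightarrow> bool" where
  "tautological D \<longleftrightarrow> (\<exists>p. (p, True) \<in> D \<and> (p, False) \<in> D)"

definition entails_clause :: "'a pf \<Rightarrow> 'a clause \<Rightarrow> bool" where
  "entails_clause \<pi> D \<longleftrightarrow> (\<forall>v. peval v \<pi> \<longrightarrow> (\<exists>(p, b) \<in> D. v p = b))"

definition clauses :: "'a pf \<Rightarrow> 'a clause set" ("\<C>") where
  "\<C> \<pi> = {D. finite D \<and> \<not> tautological D \<and> entails_clause \<pi> D
              \<and> \<not> (\<exists>D'. D' \<subset> D \<and> entails_clause \<pi> D')}"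

type_synonym ('w, 'a) model = "'w set \<times> ('w \<times> 'w) set \<times> ('a \<Rightarrow> 'w set)"

definition is_model :: "('w, 'a) model \<Rightarrow> bool" where
  "is_model M \<longleftrightarrow> (case M of (W, R, V) \<Rightarrow>
     W \<noteq> {} \<and> R \<subseteq> W \<times> W \<and> (\<forall>p. V p \<subseteq> W))"

definition is_S5 :: "('w, 'a) model \<Rightarrow> bool" where
  "is_S5 M \<longleftrightarrow> (case M of (W, R, V) \<Rightarrow> equiv W R)"

text \<open>To interpret the update operators, whose models have world set W x {0,1,2}
  (nested arbitrarily deep), we internally work with worlds of type 'w x nat list:
  the pair of world x and index i in {0,1,2} is represented by (fst x, i # snd x).
  This is a bijective copy of W x {0,1,2}.\<close>
type_synonym 'w iw = "'w \<times> nat list"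

definition cp :: "'w iw \<Rightarrow> nat \<Rightarrow> 'w iw" where
  "cp x i = (fst x, i # snd x)"

definition copy_val :: "('w iw, 'a) model \<Rightarrow> 'a clause \<Rightarrow> 'a \<Rightarrow> 'w iw \<Rightarrow> bool" where
  "copy_val M D p w \<longleftrightarrow> (case M of (W, R, V) \<Rightarrow>
      (p, False) \<in> D \<or> ((p, False) \<notin> D \<and> (p, True) \<notin> D \<and> w \<in> V p))"

definition upd_d :: "('w iw, 'a) model \<Rightarrow> ('w iw \<Rightarrow> 'a clause) \<Rightarrow> ('w iw \<Rightarrow> 'a clause)
                     \<Rightarrow> ('w iw, 'a) model" where
  "upd_d M f1 f2 = (case M of (W, R, V) \<Rightarrow>
     ({cp w i | w i. w \<in> W \<and> i < 3},
      {(cp w i, cp v j) | w v i j. (w, v) \<in> R \<and> i < 3 \<and> j < 3},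
      (\<lambda>p. {cp w 0 | w. w \<in> W \<and> w \<in> V p}
          \<union> {cp w 1 | w. w \<in> W \<and> copy_val M (f1 w) p w}
          \<union> {cp w 2 | w. w \<in> W \<and> copy_val M (f2 w) p w})))"

definition upd_u :: "('w iw, 'a) model \<Rightarrow> 'a clause \<Rightarrow> 'a clause \<Rightarrow> ('w iw, 'a) model" where
  "upd_u M D1 D2 = upd_d M (\<lambda>_. D1) (\<lambda>_. D2)"

fun sat_u :: "('w iw, 'a) model \<Rightarrow> 'w iw \<Rightarrow> 'a fm \<Rightarrow> bool" where
  "sat_u M w Top = True"
| "sat_u M w (Atom p) = (w \<in> snd (snd M) p)"
| "sat_u M w (Neg a) = (\<not> sat_u M w a)"
| "sat_u M w (And a b) = (sat_u M w a \<and> sat_u M w b)"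
| "sat_u M w (Box a) = (\<forall>v. (w, v) \<in> fst (snd M) \<longrightarrow> sat_u M v a)"
| "sat_u M w (Upd \<pi> a) = (\<forall>D1 \<in> \<C> \<pi>. \<forall>D2 \<in> \<C> (PNeg \<pi>). sat_u (upd_u M D1 D2) (cp w 0) a)"

fun sat_d :: "('w iw, 'a) model \<Rightarrow> 'w iw \<Rightarrow> 'a fm \<Rightarrow> bool" where
  "sat_d M w Top = True"
| "sat_d M w (Atom p) = (w \<in> snd (snd M) p)"
| "sat_d M w (Neg a) = (\<not> sat_d M w a)"
| "sat_d M w (And a b) = (sat_d M w a \<and> sat_d M w b)"
| "sat_d M w (Box a) = (\<forall>v. (w, v) \<in> fst (snd M) \<longrightarrow> sat_d M v a)"
| "sat_d M w (Upd \<pi> a) = (\<forall>f1 f2. (\<forall>x \<in> fst M. f1 x \<in> \<C> \<pi>) \<longrightarrow>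
        (\<forall>x \<in> fst M. f2 x \<in> \<C> (PNeg \<pi>)) \<longrightarrow> sat_d (upd_d M f1 f2) (cp w 0) a)"

text \<open>Satisfaction in an arbitrary model (worlds of any type 'w), via the
  isomorphic copy w |-> (w, []).\<close>
definition lift :: "('w, 'a) model \<Rightarrow> ('w iw, 'a) model" where
  "lift M = (case M of (W, R, V) \<Rightarrow>
     ((\<lambda>w. (w, [])) ` W, (\<lambda>(w, v). ((w, []), (v, []))) ` R, (\<lambda>p. (\<lambda>w. (w, [])) ` V p)))"

definition usat :: "('w, 'a) model \<Rightarrow> 'w \<Rightarrow> 'a fm \<Rightarrow> bool" where
  "usat M w \<phi> = sat_u (lift M) (w, []) \<phi>"

definition dsat :: "('w, 'a) model \<Rightarrow> 'w \<Rightarrow> 'a fm \<Rightarrow> bool" where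
  "dsat M w \<phi> = sat_d (lift M) (w, []) \<phi>"

definition logic_u :: "'w itself \<Rightarrow> bool \<Rightarrow> 'a fm set" where
  "logic_u _ s5 = {\<phi>. \<forall>M :: ('w, 'a) model. is_model M \<and> (s5 \<longrightarrow> is_S5 M) \<longrightarrow>
                        (\<forall>w \<in> fst M. usat M w \<phi>)}"

definition logic_d :: "'w itself \<Rightarrow> bool \<Rightarrow> 'a fm set" where
  "logic_d _ s5 = {\<phi>. \<forall>M :: ('w, 'a) model. is_model M \<and> (s5 \<longrightarrow> is_S5 M) \<longrightarrow>
                        (\<forall>w \<in> fst M. dsat M w \<phi>)}"

end

theory Submission
  imports Defs
begin

lemma C_and:
  assumes "p \<noteq> q" "D \<in> \<C> (PAnd (PAtom p) (PAtom q))"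
  shows "D = {(p,True)} \<or> D = {(q,True)}"
proof -
  from assms(2) have nt: "\<not> tautological D" and en: "entails_clause (PAnd (PAtom p) (PAtom q)) D"
    and mn: "\<not> (\<exists>D'. D' \<subset> D \<and> entails_clause (PAnd (PAtom p) (PAtom q)) D')"
    by (auto simp: clauses_def)
  have "(p,True) \<in> D \<or> (q,True) \<in> D"
  proof (rule ccontr)
    assume c: "\<not> ?thesis"
    let ?v = "(\<lambda>x. (x,False)\<in>D)(p:=True,q:=True)"
    have "peval ?v (PAnd (PAtom p) (PAtom q))" by simp
    with en obtain a b where ab: "(a,b)\<in>D" "?v a = b" unfolding entails_clause_def by blast
    show False using ab c nt unfolding tautological_def
      by (cases "a = p"; cases "a = q"; cases b; auto)
  qed
  moreover have "entails_clause (PAnd (PAtom p) (PAtom q)) {(p,True)}"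
    "entails_clause (PAnd (PAtom p) (PAtom q)) {(q,True)}"
    by (auto simp: entails_clause_def)
  ultimately show ?thesis using mn by blast
qed

lemma C_neg:
  assumes "D \<in> \<C> (PNeg (PAnd (PAtom p) (PAtom q)))"
  shows "(p,False) \<in> D \<and> (q,False) \<in> D"
proof -
  from assms have nt: "\<not> tautological D" and en: "entails_clause (PNeg (PAnd (PAtom p) (PAtom q))) D"
    by (auto simp: clauses_def)
  have "(r,False) \<in> D" if "r = p \<or> r = q" for r
  proof (rule ccontr)
    assume c: "(r,False) \<notin> D"
    let ?v = "(\<lambda>x. (x,False)\<in>D)(r:=False)"
    have "peval ?v (PNeg (PAnd (PAtom p) (PAtom q)))" using that by auto
    with en obtain a b where ab: "(a,b)\<in>D" "?v a = b" unfolding entails_clause_def by blast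
    show False using ab c nt unfolding tautological_def
      by (cases "a = r"; cases b; auto)
  qed
  then show ?thesis by blast
qed

lemma C_mem1: "{(p,True)} \<in> \<C> (PAnd (PAtom p) (PAtom q))"
  unfolding clauses_def tautological_def entails_clause_def
  by (auto simp: subset_singleton_iff)

lemma C_mem1b: "{(q,True)} \<in> \<C> (PAnd (PAtom p) (PAtom q))"
  unfolding clauses_def tautological_def entails_clause_def
  by (auto simp: subset_singleton_iff)

lemma C_mem2: 
  assumes "p \<noteq> q" shows "{(p,False),(q,False)} \<in> \<C> (PNeg (PAnd (PAtom p) (PAtom q)))"
proof -
  have "\<not> entails_clause (PNeg (PAnd (PAtom p) (PAtom q))) D'" if "D' \<subset> {(p,False),(q,False)}" for D'
  proof -
    from that have "D' \<subseteq> {(p,False)} \<or> D' \<subseteq> {(q,False)}" by auto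
    then show ?thesis unfolding entails_clause_def
    proof
      assume "D' \<subseteq> {(p,False)}" then show "\<not> (\<forall>v. peval v (PNeg (PAnd (PAtom p) (PAtom q))) \<longrightarrow> (\<exists>(a, b)\<in>D'. v a = b))"
        using assms by (auto intro!: exI[of _ "\<lambda>x. x = p"])
    next
      assume "D' \<subseteq> {(q,False)}" then show "\<not> (\<forall>v. peval v (PNeg (PAnd (PAtom p) (PAtom q))) \<longrightarrow> (\<exists>(a, b)\<in>D'. v a = b))"
        using assms by (auto intro!: exI[of _ "\<lambda>x. x = q"])
    qed
  qed
  then show ?thesis using assms unfolding clauses_def tautological_def
    by (auto simp: entails_clause_def)
qed


lemma unif:
  assumes pq: "p \<noteq> q" and M: "is_model (W,R,V)" and w: "w \<in> W"
  shows "usat (W,R,V) w (Imp (Box (And (Atom p) (Atom q)))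
                    (Upd (PAnd (PAtom p) (PAtom q)) (Or (Box (Atom p)) (Box (Atom q)))))"
proof -
  have RW: "(a,b)\<in>R \<Longrightarrow> b \<in> W" for a b using M by (auto simp: is_model_def)
  { fix D1 D2
    assume D1: "D1 \<in> \<C> (PAnd (PAtom p) (PAtom q))" and D2: "D2 \<in> \<C> (PNeg (PAnd (PAtom p) (PAtom q)))"
      and box: "\<forall>v. (w,v)\<in>R \<longrightarrow> v \<in> V p \<and> v \<in> V q"
    from C_neg[OF D2] have d2: "(p,False)\<in>D2" "(q,False)\<in>D2" by auto
    from C_and[OF pq D1] have "D1 = {(p,True)} \<or> D1 = {(q,True)}" .
    then have "sat_u (upd_u (lift (W,R,V)) D1 D2) (cp (w,[]) 0) (Or (Box (Atom p)) (Box (Atom q)))"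
    proof
      assume d1: "D1 = {(p,True)}"
      show ?thesis using d1 d2 pq box RW
        by (auto simp add: Or_def upd_u_def upd_d_def lift_def cp_def copy_val_def)
    next
      assume d1: "D1 = {(q,True)}"
      show ?thesis using d1 d2 pq box RW
        by (auto simp add: Or_def upd_u_def upd_d_def lift_def cp_def copy_val_def)
    qed
  }
  note key = this
  have conv: "\<forall>v. (w,v)\<in>R \<longrightarrow> v \<in> V p \<and> v \<in> V q"
    if b: "sat_u (lift (W, R, V)) (w,[]) (Box (And (Atom p) (Atom q)))"
  proof (intro allI impI)
    fix v assume "(w,v)\<in>R"
    then have "((w, []), (v,[])) \<in> fst (snd (lift (W, R, V)))" by (force simp: lift_def)
    with b have "sat_u (lift (W, R, V)) (v,[]) (And (Atom p) (Atom q))" by simp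
    then show "v \<in> V p \<and> v \<in> V q" by (auto simp: lift_def)
  qed
  show ?thesis unfolding usat_def Imp_def
    using key conv by (simp only: sat_u.simps) blast
qed


lemma upd_R: "(w,v)\<in>R \<Longrightarrow> i < 3 \<Longrightarrow> j < 3 \<Longrightarrow> (cp w i, cp v j) \<in> fst (snd (upd_d (W,R,V) f1 f2))"
  unfolding upd_d_def by (simp only: prod.case fst_conv snd_conv) blast

lemma cp_inj: "cp w i = cp v j \<longleftrightarrow> w = v \<and> i = j"
  by (cases w; cases v) (auto simp: cp_def)

lemma upd_V1: "cp w 1 \<in> snd (snd (upd_d (W,R,V) f1 f2)) p \<Longrightarrow> copy_val (W,R,V) (f1 w) p w"
  unfolding upd_d_def by (auto simp: cp_inj)

definition cm :: "(nat, 'a) model" where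
  "cm = ({0,1}, {0,1} \<times> {0,1}, \<lambda>_. {0,1})"

lemma cm_model: "is_model cm" "is_S5 cm"
  by (auto simp: cm_def is_model_def is_S5_def equiv_def refl_on_def sym_def trans_def)

lemma lift_cm: "lift cm = ((\<lambda>w. (w, [])) ` {0,1}, (\<lambda>(w, v). ((w, []), (v, []))) ` ({0,1} \<times> {0,1}), (\<lambda>_. (\<lambda>w. (w, [])) ` {0,1}))"
  by (simp add: lift_def cm_def)

lemma dep:
  assumes pq: "p \<noteq> q"
  shows "\<not> dsat cm 0 (Imp (Box (And (Atom p) (Atom q)))
                    (Upd (PAnd (PAtom p) (PAtom q)) (Or (Box (Atom p)) (Box (Atom q)))))"
proof -
  define f1 :: "nat iw \<Rightarrow> 'a clause" where "f1 = (\<lambda>x. if fst x = 0 then {(p,True)} else {(q,True)})"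
  define f2 :: "nat iw \<Rightarrow> 'a clause" where "f2 = (\<lambda>_. {(p,False),(q,False)})"
  have b: "sat_d (lift cm) (0,[]) (Box (And (Atom p) (Atom q)))"
    unfolding lift_cm by auto
  have f1m: "\<forall>x \<in> fst (lift cm). f1 x \<in> \<C> (PAnd (PAtom p) (PAtom q))"
  proof
    fix x show "f1 x \<in> \<C> (PAnd (PAtom p) (PAtom q))"
    proof (cases "fst x = 0")
      case True then show ?thesis using C_mem1[of p q] by (simp add: f1_def)
    next
      case False 
      then show ?thesis using C_mem1b[where p=p and q=q] by (simp add: f1_def)
    qed
  qed
  have f2m: "\<forall>x \<in> fst (lift cm). f2 x \<in> \<C> (PNeg (PAnd (PAtom p) (PAtom q)))"
    using C_mem2[OF pq] by (simp add: f2_def)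
  have r01: "((a::nat,[]),(b,[])) \<in> fst (snd (lift cm :: (nat iw, 'a) model))" if "a \<in> {0,1}" "b \<in> {0,1}" for a b
    unfolding lift_cm using that by auto
  obtain W R V where WRV: "(lift cm :: (nat iw, 'a) model) = (W,R,V)" by (metis prod_cases3)
  have np: "\<not> sat_d (upd_d (lift cm) f1 f2) (cp (0,[]) 0) (Box (Atom p))"
  proof -
    have "(cp (0,[]) 0, cp (0,[]) 1) \<in> fst (snd (upd_d (lift cm) f1 f2))"
      unfolding WRV using r01[of 0 0, unfolded WRV] by (intro upd_R) auto
    moreover have "cp (0,[]) 1 \<notin> snd (snd (upd_d (lift cm) f1 f2)) p"
    proof
      assume "cp (0,[]) 1 \<in> snd (snd (upd_d (lift cm) f1 f2)) p"
      from upd_V1[OF this[unfolded WRV]] show False by (simp add: copy_val_def f1_def)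
    qed
    ultimately show ?thesis by (simp only: sat_d.simps) blast
  qed
  have nq: "\<not> sat_d (upd_d (lift cm) f1 f2) (cp (0,[]) 0) (Box (Atom q))"
  proof -
    have "(cp (0,[]) 0, cp (1,[]) 1) \<in> fst (snd (upd_d (lift cm) f1 f2))"
      unfolding WRV using r01[of 0 1, unfolded WRV] by (intro upd_R) auto
    moreover have "cp (1,[]) 1 \<notin> snd (snd (upd_d (lift cm) f1 f2)) q"
    proof
      assume "cp (1,[]) 1 \<in> snd (snd (upd_d (lift cm) f1 f2)) q"
      from upd_V1[OF this[unfolded WRV]] show False using pq by (simp add: copy_val_def f1_def)
    qed
    ultimately show ?thesis by (simp only: sat_d.simps) blast
  qed
  have "\<not> sat_d (lift cm) (0,[]) (Upd (PAnd (PAtom p) (PAtom q)) (Or (Box (Atom p)) (Box (Atom q))))"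
    using f1m f2m np nq by (simp only: sat_d.simps Or_def) blast
  then show ?thesis using b unfolding dsat_def Imp_def by simp
qed

lemma usat_phi:
  assumes pq: "p \<noteq> q" and m: "is_model M" and w: "w \<in> fst M"
  shows "usat M w (Imp (Box (And (Atom p) (Atom q)))
                    (Upd (PAnd (PAtom p) (PAtom q)) (Or (Box (Atom p)) (Box (Atom q)))))"
proof -
  obtain W R V where M: "M = (W,R,V)" by (metis prod_cases3)
  show ?thesis unfolding M
    by (rule unif[OF pq]) (use m w M in simp_all)
qed

theorem proposition9:
  fixes p q :: "'a :: countable"
  assumes "p \<noteq> q"
  defines "\<phi> \<equiv> Imp (Box (And (Atom p) (Atom q)))
                    (Upd (PAnd (PAtom p) (PAtom q)) (Or (Box (Atom p)) (Box (Atom q))))"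
  shows "(\<forall>M :: ('w, 'a) model. is_model M \<longrightarrow> (\<forall>w \<in> fst M. usat M w \<phi>))
       \<and> (\<exists>M :: (nat, 'a) model. is_model M \<and> is_S5 M \<and> (\<exists>w \<in> fst M. \<not> dsat M w \<phi>))
       \<and> logic_u TYPE(nat) False \<noteq> (logic_d TYPE(nat) False :: 'a fm set)
       \<and> logic_u TYPE(nat) True \<noteq> (logic_d TYPE(nat) True :: 'a fm set)"
proof -
  have D: "\<not> dsat (cm :: (nat, 'a) model) 0 \<phi>" unfolding \<phi>_def using dep[OF assms(1)] .
  have cm0: "(0::nat) \<in> fst (cm :: (nat,'a) model)" by (simp add: cm_def)
  have E: "\<exists>M :: (nat, 'a) model. is_model M \<and> is_S5 M \<and> (\<exists>w \<in> fst M. \<not> dsat M w \<phi>)"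
    by (intro exI[of _ "cm :: (nat,'a) model"] conjI cm_model bexI[of _ 0] D cm0)
  have inU: "\<phi> \<in> logic_u TYPE(nat) b" for b
    unfolding logic_u_def mem_Collect_eq
  proof (intro allI impI ballI)
    fix M :: "(nat, 'a) model" and w assume "is_model M \<and> (b \<longrightarrow> is_S5 M)" "w \<in> fst M"
    then have "is_model M" "w \<in> fst M" by auto
    from usat_phi[OF assms(1) this] show "usat M w \<phi>" unfolding \<phi>_def .
  qed
  have ninD: "\<phi> \<notin> logic_d TYPE(nat) b" for b
  proof
    assume "\<phi> \<in> logic_d TYPE(nat) b"
    then have "\<forall>M :: (nat, 'a) model. is_model M \<and> (b \<longrightarrow> is_S5 M) \<longrightarrow> (\<forall>w \<in> fst M. dsat M w \<phi>)"
      unfolding logic_d_def by (simp only: mem_Collect_eq)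
    then have "is_model (cm :: (nat, 'a) model) \<and> (b \<longrightarrow> is_S5 (cm :: (nat, 'a) model)) \<longrightarrow> (\<forall>w \<in> fst (cm :: (nat, 'a) model). dsat cm w \<phi>)"
      by (rule spec)
    then have "\<forall>w \<in> fst (cm :: (nat, 'a) model). dsat cm w \<phi>" using cm_model by blast
    then show False using D cm0 by simp
  qed
  have "logic_u TYPE(nat) b \<noteq> (logic_d TYPE(nat) b :: 'a fm set)" for b
    using inU[of b] ninD[of b] by blast
  moreover have "\<forall>M :: ('w, 'a) model. is_model M \<longrightarrow> (\<forall>w \<in> fst M. usat M w \<phi>)"
  proof (intro allI impI ballI)
    fix M :: "('w, 'a) model" and w assume "is_model M" "w \<in> fst M"
    from usat_phi[OF assms(1) this] show "usat M w \<phi>" unfolding \<phi>_def .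
  qed
  ultimately show ?thesis using E by blast
qed

end
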